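(* Let $n\ge1$, $P>0$, $b>0$ and fixed parameters $\widetilde\alpha_r>0$, $r=1,\dots,n$. For $\boldsymbol{\alpha}\in\mathcal{A}:=\{\boldsymbol{\alpha}: 0<\alpha_r\le b,\ r=1,\dots,n\}$ let $$(x_1^*(\boldsymbol{\alpha}),\dots,x_n^*(\boldsymbol{\alpha}))=\arg\max_{x_r>0,\ \sum_{r=1}^n x_r\le P}\ \sum_{r=1}^n\frac{x_r^{1-\alpha_r}}{1-\alpha_r},\qquad \Psi(\boldsymbol{\alpha})=\sum_{r=1}^n\frac{x_r^*(\boldsymbol{\alpha})^{1-\widetilde\alpha_r}}{1-\widetilde\alpha_r}.$$ Let $\boldsymbol{\alpha}^*\in\arg\max_{\boldsymbol{\alpha}\in\mathcal{A}}\Psi(\boldsymbol{\alpha})$ be any solution. Then $(x_1^*(\boldsymbol{\alpha}^* ),\dots,x_n^*(\boldsymbol{\alpha}^* ))$ is a solution of $$\max_{x_1,\dots,x_n}\ \sum_{r=1}^n\frac{x_r^{1-\widetilde\alpha_r}}{1-\widetilde\alpha_r}\quad\text{subject to}\quad \sum_{r=1}^nx_r\le P,\ x_r>0,\ r=1,\dots,n.$$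
   Context: This is a single-link network shared by $n$ users with link capacity $P$; the upper-level true utilities are $\alpha$-fairness functions with parameters $\widetilde\alpha_r$, and the lower level allocates rates using $\alpha$-fairness surrogate utilities with tunable parameters $\alpha_r$. *)

theory Defs
  imports Complex_Main
begin

text \<open>alpha-fairness utility; the case alpha = 1 is the standard logarithmic limit.\<close>
definition alpha_util :: "real \<Rightarrow> real \<Rightarrow> real" where
  "alpha_util a x = (if a = 1 then ln x else x powr (1 - a) / (1 - a))"

definition feasible_alloc :: "nat \<Rightarrow> real \<Rightarrow> (nat \<Rightarrow> real) \<Rightarrow> bool" where
  "feasible_alloc n P x \<longleftrightarrow> (\<forall>r\<in>{1..n}. 0 < x r) \<and> (\<Sum>r=1..n. x r) \<le> P"

definition total_util :: "nat \<Rightarrow> (nat \<Rightarrow> real) \<Rightarrow> (nat \<Rightarrow> real) \<Rightarrow> real" where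
  "total_util n a x = (\<Sum>r=1..n. alpha_util (a r) (x r))"

definition is_opt_alloc :: "nat \<Rightarrow> real \<Rightarrow> (nat \<Rightarrow> real) \<Rightarrow> (nat \<Rightarrow> real) \<Rightarrow> bool" where
  "is_opt_alloc n P a x \<longleftrightarrow> feasible_alloc n P x \<and>
     (\<forall>y. feasible_alloc n P y \<longrightarrow> total_util n a y \<le> total_util n a x)"

definition param_set :: "nat \<Rightarrow> real \<Rightarrow> (nat \<Rightarrow> real) set" where
  "param_set n b = {a. \<forall>r\<in>{1..n}. 0 < a r \<and> a r \<le> b}"

end

theory Submission
  imports Defs
begin

lemma util_deriv:
  assumes "z > 0"
  shows "DERIV (alpha_util a) z :> z powr (-a)"
proof (cases "a = 1")
  case True
  have "alpha_util a = ln" using True by (auto simp: alpha_util_def fun_eq_iff)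
  moreover have "DERIV ln z :> z powr (-a)" using True assms
    by (auto intro!: derivative_eq_intros simp: powr_minus_divide)
  ultimately show ?thesis by simp
next
  case False
  have "alpha_util a = (\<lambda>z. z powr (1-a) / (1-a))" using False by (auto simp: alpha_util_def fun_eq_iff)
  moreover have "DERIV (\<lambda>z. z powr (1-a) / (1-a)) z :> z powr (-a)"
    using False assms by (auto intro!: derivative_eq_intros)
  ultimately show ?thesis by simp
qed

lemma tangent_strict:
  assumes a: "a > 0" and x: "x > 0" and y: "y > 0" and ne: "y \<noteq> x"
  shows "alpha_util a y < alpha_util a x + x powr (-a) * (y - x)"
proof -
  define g where "g = (\<lambda>z. alpha_util a x + x powr (-a) * (z - x) - alpha_util a z)"
  have dg: "DERIV g z :> x powr (-a) - z powr (-a)" if "z > 0" for z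
    unfolding g_def using util_deriv[OF that, of a]
    by (auto intro!: derivative_eq_intros)
  have g0: "g x = 0" by (simp add: g_def)
  show ?thesis
  proof (cases "y < x")
    case True
    obtain z where z: "y < z" "z < x" "g x - g y = (x - y) * (x powr (-a) - z powr (-a))"
      using MVT2[OF True, of g "\<lambda>z. x powr (-a) - z powr (-a)"] dg y by force
    have "x powr (-a) < z powr (-a)" using z y a by (intro powr_less_mono2_neg) auto
    hence "(x - y) * (x powr (-a) - z powr (-a)) < 0" using True by (intro mult_pos_neg) auto
    hence "g y > 0" using z g0 by linarith
    thus ?thesis by (simp add: g_def)
  next
    case False
    hence xy: "x < y" using ne by simp
    obtain z where z: "x < z" "z < y" "g y - g x = (y - x) * (x powr (-a) - z powr (-a))"
      using MVT2[OF xy, of g "\<lambda>z. x powr (-a) - z powr (-a)"] dg x by force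
    have "z powr (-a) < x powr (-a)" using z x a by (intro powr_less_mono2_neg) auto
    hence "g y > 0" using z g0 xy by simp
    thus ?thesis by (simp add: g_def)
  qed
qed

lemma tangent:
  assumes a: "a > 0" and x: "x > 0" and y: "y > 0"
  shows "alpha_util a y \<le> alpha_util a x + x powr (-a) * (y - x)"
  using tangent_strict[OF assms] by (cases "y = x") auto


lemma kkt_opt:
  assumes apos: "\<forall>r\<in>{1..n}. a r > 0" and xpos: "\<forall>r\<in>{1..n}. x r > 0"
    and xsum: "(\<Sum>r=1..n. x r) = P"
    and marg: "\<forall>r\<in>{1..n}. x r powr (- a r) = c" and c: "c > 0"
    and y: "feasible_alloc n P y"
  shows "total_util n a y \<le> total_util n a x"
    and "(\<exists>r\<in>{1..n}. y r \<noteq> x r) \<Longrightarrow> total_util n a y < total_util n a x"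
proof -
  have ypos: "\<forall>r\<in>{1..n}. y r > 0" and ysum: "(\<Sum>r=1..n. y r) \<le> P"
    using y by (auto simp: feasible_alloc_def)
  have le: "\<forall>r\<in>{1..n}. alpha_util (a r) (y r) \<le> alpha_util (a r) (x r) + c * (y r - x r)"
    using tangent apos xpos ypos marg by metis
  have "(\<Sum>r=1..n. alpha_util (a r) (x r) + c * (y r - x r))
      = total_util n a x + c * ((\<Sum>r=1..n. y r) - (\<Sum>r=1..n. x r))"
    by (simp add: total_util_def sum.distrib sum_distrib_left sum_subtractf algebra_simps)
  also have "\<dots> \<le> total_util n a x" using ysum xsum c by (simp add: mult_nonpos_nonneg mult_le_0_iff)
  finally have bound: "(\<Sum>r=1..n. alpha_util (a r) (x r) + c * (y r - x r)) \<le> total_util n a x" .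
  show "total_util n a y \<le> total_util n a x"
  proof -
    have "(\<Sum>r=1..n. alpha_util (a r) (y r)) \<le> (\<Sum>r=1..n. alpha_util (a r) (x r) + c * (y r - x r))"
      using le by (intro sum_mono) auto
    thus ?thesis using bound by (simp add: total_util_def)
  qed
  assume "\<exists>r\<in>{1..n}. y r \<noteq> x r"
  then obtain r where r: "r \<in> {1..n}" "y r \<noteq> x r" by blast
  have "alpha_util (a r) (y r) < alpha_util (a r) (x r) + c * (y r - x r)"
    using tangent_strict[of "a r" "x r" "y r"] apos xpos ypos marg r by metis
  hence "(\<Sum>r=1..n. alpha_util (a r) (y r)) < (\<Sum>r=1..n. alpha_util (a r) (x r) + c * (y r - x r))"
    using r le by (intro sum_strict_mono_ex1) auto
  thus "total_util n a y < total_util n a x" using bound by (simp add: total_util_def)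
qed


theorem theorem2:
  fixes n :: nat and P b :: real
    and atil :: "nat \<Rightarrow> real"
    and xstar :: "(nat \<Rightarrow> real) \<Rightarrow> (nat \<Rightarrow> real)"
    and astar :: "nat \<Rightarrow> real"
  assumes "n \<ge> 1" and "P > 0" and "b > 0"
    and "\<forall>r\<in>{1..n}. atil r > 0"
    and "\<forall>a\<in>param_set n b. is_opt_alloc n P a (xstar a)"
    and "astar \<in> param_set n b"
    and "\<forall>a\<in>param_set n b. total_util n atil (xstar a) \<le> total_util n atil (xstar astar)"
  shows "is_opt_alloc n P atil (xstar astar)"
proof -
  note n = assms(1) and P = assms(2) and b = assms(3) and apos = assms(4)
  define S where "S = (\<Sum>r=1..n. atil r)"
  have aleS: "atil r \<le> S" if "r \<in> {1..n}" for r
    unfolding S_def using that apos by (intro member_le_sum) (auto simp: less_imp_le)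
  have Spos: "S > 0" using aleS[of 1] apos n by force
  have ratio: "S / atil r \<ge> 1" if "r \<in> {1..n}" for r
    using aleS[OF that] apos that by simp
  define f where "f = (\<lambda>\<mu>. \<Sum>r=1..n. exp (- \<mu> / atil r))"
  define m1 where "m1 = - S * \<bar>ln P\<bar>"
  define m2 where "m2 = S * \<bar>ln (P / n)\<bar>"
  have "0 \<le> S * \<bar>ln P\<bar>" "0 \<le> S * \<bar>ln (P / n)\<bar>" using Spos by simp_all
  hence "m1 \<le> m2" unfolding m1_def m2_def by linarith
  have f1: "P \<le> f m1"
  proof -
    have "\<bar>ln P\<bar> \<le> (S / atil 1) * \<bar>ln P\<bar>"
      using mult_right_mono[OF ratio[of 1] abs_ge_zero[of "ln P"]] n by simp
    hence "ln P \<le> - m1 / atil 1" unfolding m1_def by (simp add: field_simps)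
    hence "P \<le> exp (- m1 / atil 1)" using P by (metis exp_le_cancel_iff exp_ln)
    also have "\<dots> \<le> f m1" unfolding f_def using n by (intro member_le_sum) auto
    finally show ?thesis .
  qed
  have f2: "f m2 \<le> P"
  proof -
    have "\<forall>r\<in>{1..n}. exp (- m2 / atil r) \<le> P / n"
    proof
      fix r assume r: "r \<in> {1..n}"
      have "atil r * \<bar>ln (P/n)\<bar> \<le> S * \<bar>ln (P/n)\<bar>"
        using mult_right_mono[OF aleS[OF r] abs_ge_zero[of "ln (P/n)"]] by simp
      moreover have "atil r * (- \<bar>ln (P/n)\<bar>) \<le> atil r * ln (P/n)"
        using apos r by (intro mult_left_mono) (auto simp: less_imp_le)
      ultimately have "- (S * \<bar>ln (P/n)\<bar>) \<le> atil r * ln (P/n)" by linarith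
      hence "- m2 / atil r \<le> ln (P / n)" unfolding m2_def using apos r by (simp add: field_simps)
      hence "exp (- m2 / atil r) \<le> exp (ln (P / n))" by simp
      also have "\<dots> = P / n" using P n by simp
      finally show "exp (- m2 / atil r) \<le> P / n" .
    qed
    hence "f m2 \<le> real (card {1..n}) * (P / n)" unfolding f_def by (intro sum_bounded_above) auto
    also have "\<dots> = P" using n by simp
    finally show ?thesis .
  qed
  have cont: "\<forall>x. m1 \<le> x \<and> x \<le> m2 \<longrightarrow> isCont f x"
    unfolding f_def using apos by (auto intro!: continuous_intros simp: less_imp_neq[symmetric])
  obtain mu where mu: "f mu = P" using IVT2[of f m2 P m1, OF f2 f1 \<open>m1 \<le> m2\<close> cont] by blast
  define xt where "xt = (\<lambda>r. exp (- mu / atil r))"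
  have xtpos: "\<forall>r\<in>{1..n}. xt r > 0" unfolding xt_def by simp
  have xtsum: "(\<Sum>r=1..n. xt r) = P" using mu unfolding f_def xt_def by simp
  have margt: "\<forall>r\<in>{1..n}. xt r powr (- atil r) = exp mu"
  proof
    fix r assume "r \<in> {1..n}"
    hence "atil r \<noteq> 0" using apos by force
    thus "xt r powr (- atil r) = exp mu" unfolding xt_def by (simp add: powr_def)
  qed
  define t where "t = b / S"
  have tpos: "t > 0" unfolding t_def using b Spos by simp
  define a where "a = (\<lambda>r. t * atil r)"
  have apos': "\<forall>r\<in>{1..n}. a r > 0" unfolding a_def using tpos apos by simp
  have aP: "a \<in> param_set n b"
    unfolding param_set_def
  proof (intro CollectI ballI conjI)
    fix r assume r: "r \<in> {1..n}"
    show "0 < a r" using apos' r by simp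
    have "t * atil r \<le> t * S" using aleS[OF r] tpos by simp
    thus "a r \<le> b" unfolding a_def t_def using Spos by simp
  qed
  have marga: "\<forall>r\<in>{1..n}. xt r powr (- a r) = exp (t * mu)"
  proof
    fix r assume "r \<in> {1..n}"
    hence "atil r \<noteq> 0" using apos by force
    thus "xt r powr (- a r) = exp (t * mu)" unfolding xt_def a_def by (simp add: powr_def)
  qed
  have opt: "is_opt_alloc n P a (xstar a)" using assms(5) aP by blast
  have xtfeas: "feasible_alloc n P xt" using xtpos xtsum by (simp add: feasible_alloc_def)
  have eq: "\<forall>r\<in>{1..n}. xstar a r = xt r"
  proof (rule ccontr)
    assume "\<not> ?thesis"
    hence "\<exists>r\<in>{1..n}. xstar a r \<noteq> xt r" by blast
    hence "total_util n a (xstar a) < total_util n a xt"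
      using kkt_opt(2)[OF apos' xtpos xtsum marga _ ] opt by (simp add: is_opt_alloc_def)
    moreover have "total_util n a xt \<le> total_util n a (xstar a)"
      using opt xtfeas by (simp add: is_opt_alloc_def)
    ultimately show False by simp
  qed
  have "total_util n atil (xstar a) = total_util n atil xt"
    unfolding total_util_def using eq by (intro sum.cong) auto
  hence main: "total_util n atil xt \<le> total_util n atil (xstar astar)"
    using assms(7) aP by metis
  show ?thesis unfolding is_opt_alloc_def
  proof (intro conjI allI impI)
    show "feasible_alloc n P (xstar astar)" using assms(5,6) by (simp add: is_opt_alloc_def)
    fix y assume "feasible_alloc n P y"
    hence "total_util n atil y \<le> total_util n atil xt"
      using kkt_opt(1)[OF apos xtpos xtsum margt] by simp
    thus "total_util n atil y \<le> total_util n atil (xstar astar)" using main by simp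
  qed
qed

end
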